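(* Let $\delta\in(0,1)$, let $K\in\mathcal T_h$ and $\mathbb B_h\in\mathcal W_h$. Then $\lambda_i^\delta\in[0,1]$ for every $i\in\{1,\dots,d\}$ with $\beta_\delta(\mathbb B^K_i)\neq\beta_\delta(\mathbb B^K_0)$ (in particular its denominator is then strictly positive), and on $K$ the discrete chain rule $$\sum_{j=1}^d\mathbf\Lambda^\delta_{i,j}(\mathbb B_h):\partial_{x_j}\mathcal I_h\big[-\mathbb B_h+\beta_\delta^{-1}(\mathbb B_h)\big]=\partial_{x_i}\mathcal I_h\big[-\operatorname{tr}f_\delta(\mathbb B_h)+\operatorname{tr}\ln\beta_\delta^{-1}(\mathbb B_h)\big],\qquad i=1,\dots,d,$$ holds. If moreover the family $\{\mathcal T_h\}_{h>0}$ is shape regular (i.e. $\sup_{K\in\mathcal T_h}h_K\rho_K^{-1}\le C$, $\rho_K$ the inradius-diameter of $K$), then there is a constant $C$ independent of $h,\delta,K,\mathbb B_h$ such that $$\max_{i,j\in\{1,\dots,d\}}\|\mathbf\Lambda^\delta_{i,j}(\mathbb B_h)\|_{L^\infty(K)}\le C\,\|\mathcal I_h[\beta_\delta(\mathbb B_h)]\|_{L^\infty(K)}.$$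
   Context: $\Omega\subset\mathbb R^d$, $d\in\{2,3\}$, polyhedral, $\mathcal T_h$ a conforming triangulation of $\overline\Omega$ into open simplices, $h_K=\operatorname{diam}K$. $\mathcal W_h$ is the space of continuous functions $\overline\Omega\to\mathbb R^{d\times d}_{\mathrm S}$ (symmetric matrices) which are affine on each $K\in\mathcal T_h$; $\mathcal I_h$ is the nodal (vertex) piecewise-linear interpolation operator, applied componentwise. Matrix functions of symmetric matrices are defined via the spectral decomposition; $\beta_\delta(s)=\max\{s,\delta\}$, $\beta_\delta^{-1}(\mathbb B)$ is the matrix inverse of $\beta_\delta(\mathbb B)$, and $f_\delta(s)=\frac12s^2$ for $s\ge\delta$, $f_\delta(s)=\delta s-\frac12\delta^2$ for $s<\delta$. For $K$ with vertices $P_0^K,\dots,P_d^K$ let $\mathcal B_K(\hat x)=P_0^K+\mathcal A_K\hat x$ be the affine map from the reference simplex onto $K$ ($\mathcal A_K$ nonsingular), and $\mathbb B^K_j:=\mathbb B_h(P_j^K)$. For $i=1,\dots,d$: if $\beta_\delta(\mathbb B_i^K)=\beta_\delta(\mathbb B_0^K)$ set $\hat{\mathbf\Lambda}_i^\delta:=\beta_\delta(\mathbb B_i^K)$; otherwise set $\hat{\mathbf\Lambda}_i^\delta:=\beta_\delta(\mathbb B_i^K)+\lambda_i^\delta(\beta_\delta(\mathbb B_0^K)-\beta_\delta(\mathbb B_i^K))$, where, with $\Delta_i:=\mathbb B_i^K-\beta_\delta^{-1}(\mathbb B_i^K)-\mathbb B_0^K+\beta_\delta^{-1}(\mathbb B_0^K)$,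 $$\lambda_i^\delta:=\frac{-\operatorname{tr}f_\delta(\mathbb B_i^K)+\operatorname{tr}\ln\beta_\delta^{-1}(\mathbb B_i^K)+\operatorname{tr}f_\delta(\mathbb B_0^K)-\operatorname{tr}\ln\beta_\delta^{-1}(\mathbb B_0^K)+\beta_\delta(\mathbb B_i^K):\Delta_i}{(\beta_\delta(\mathbb B_i^K)-\beta_\delta(\mathbb B_0^K)):\Delta_i}.$$ Then on $K$, $\mathbf\Lambda^\delta_{i,j}(\mathbb B_h)|_K:=\sum_{m=1}^d[(\mathcal A_K^\top)^{-1}]_{i,m}\,\hat{\mathbf\Lambda}^\delta_m\,[\mathcal A_K^\top]_{m,j}\in\mathbb R^{d\times d}_{\mathrm S}$ for $i,j\in\{1,\dots,d\}$. *)

theory Defs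
  imports "HOL-Analysis.Analysis"
begin

text \<open>Symmetric d x d matrices are represented as elements of real^'n^'n
  with transpose A = A; the dimension is d = CARD('n).\<close>

definition symmetric_mat :: "real^'n^'n \<Rightarrow> bool" where
  "symmetric_mat A \<longleftrightarrow> transpose A = A"

definition diag_mat :: "real^'n \<Rightarrow> real^'n^'n" where
  "diag_mat l = (\<chi> i j. if i = j then l $ i else 0)"

definition matfun :: "(real \<Rightarrow> real) \<Rightarrow> real^'n^'n \<Rightarrow> real^'n^'n" where
  "matfun f A = (SOME M. \<exists>Q l. orthogonal_matrix Q \<and> A = Q ** diag_mat l ** transpose Q
                     \<and> M = Q ** diag_mat (\<chi> i. f (l $ i)) ** transpose Q)"

definition frob :: "real^'n^'n \<Rightarrow> real^'n^'n \<Rightarrow> real" where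
  "frob A B = (\<Sum>i\<in>UNIV. \<Sum>j\<in>UNIV. A $ i $ j * B $ i $ j)"

definition beta_d :: "real \<Rightarrow> real \<Rightarrow> real" where
  "beta_d \<delta> s = max s \<delta>"

definition f_d :: "real \<Rightarrow> real \<Rightarrow> real" where
  "f_d \<delta> s = (if s \<ge> \<delta> then s^2 / 2 else \<delta> * s - \<delta>^2 / 2)"

definition betaM :: "real \<Rightarrow> real^'n^'n \<Rightarrow> real^'n^'n" where
  "betaM \<delta> B = matfun (beta_d \<delta>) B"

definition betaInvM :: "real \<Rightarrow> real^'n^'n \<Rightarrow> real^'n^'n" where
  "betaInvM \<delta> B = matrix_inv (betaM \<delta> B)"

definition entropy_term :: "real \<Rightarrow> real^'n^'n \<Rightarrow> real" where
  "entropy_term \<delta> B = - trace (matfun (f_d \<delta>) B) + trace (matfun ln (betaInvM \<delta> B))"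

definition dual_term :: "real \<Rightarrow> real^'n^'n \<Rightarrow> real^'n^'n" where
  "dual_term \<delta> B = - B + betaInvM \<delta> B"

definition Delta_i :: "real \<Rightarrow> real^'n^'n \<Rightarrow> real^'n^'n \<Rightarrow> real^'n^'n" where
  "Delta_i \<delta> B0 Bi = Bi - betaInvM \<delta> Bi - B0 + betaInvM \<delta> B0"

definition lam_num :: "real \<Rightarrow> real^'n^'n \<Rightarrow> real^'n^'n \<Rightarrow> real" where
  "lam_num \<delta> B0 Bi =
     - trace (matfun (f_d \<delta>) Bi) + trace (matfun ln (betaInvM \<delta> Bi))
     + trace (matfun (f_d \<delta>) B0) - trace (matfun ln (betaInvM \<delta> B0))
     + frob (betaM \<delta> Bi) (Delta_i \<delta> B0 Bi)"

definition lam_den :: "real \<Rightarrow> real^'n^'n \<Rightarrow> real^'n^'n \<Rightarrow> real" where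
  "lam_den \<delta> B0 Bi = frob (betaM \<delta> Bi - betaM \<delta> B0) (Delta_i \<delta> B0 Bi)"

text \<open>lambda_i^delta for vertex values B0 = B_h(P_0^K), Bi = B_h(P_i^K).\<close>
definition lam :: "real \<Rightarrow> real^'n^'n \<Rightarrow> real^'n^'n \<Rightarrow> real" where
  "lam \<delta> B0 Bi = lam_num \<delta> B0 Bi / lam_den \<delta> B0 Bi"

definition LamHat :: "real \<Rightarrow> real^'n^'n \<Rightarrow> real^'n^'n \<Rightarrow> real^'n^'n" where
  "LamHat \<delta> B0 Bi =
     (if betaM \<delta> Bi = betaM \<delta> B0 then betaM \<delta> Bi
      else betaM \<delta> Bi + lam \<delta> B0 Bi *\<^sub>R (betaM \<delta> B0 - betaM \<delta> Bi))"

text \<open>Lambda^delta_{i,j}(B_h) on K, where A = A_K (columns P_m - P_0),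
  B0 = B_h(P_0^K), B m = B_h(P_m^K).\<close>
definition LamK :: "real \<Rightarrow> real^'n^'n \<Rightarrow> real^'n^'n \<Rightarrow> ('n \<Rightarrow> real^'n^'n) \<Rightarrow> 'n \<Rightarrow> 'n \<Rightarrow> real^'n^'n" where
  "LamK \<delta> A B0 B i j =
     (\<Sum>m\<in>UNIV. (matrix_inv (transpose A) $ i $ m * transpose A $ m $ j) *\<^sub>R LamHat \<delta> B0 (B m))"

definition affA :: "real^'n \<Rightarrow> ('n \<Rightarrow> real^'n) \<Rightarrow> real^'n^'n" where
  "affA P0 P = (\<chi> r c. (P c - P0) $ r)"

definition simplexK :: "real^'n \<Rightarrow> ('n \<Rightarrow> real^'n) \<Rightarrow> (real^'n) set" where
  "simplexK P0 P = interior (convex hull (insert P0 (range P)))"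

text \<open>Nodal P1 interpolant on K of a function with vertex values g0 (at P0) and g m (at P m):
  the unique affine function with these vertex values (via barycentric coordinates).\<close>
definition interpK :: "real^'n \<Rightarrow> ('n \<Rightarrow> real^'n) \<Rightarrow> 'b::real_vector \<Rightarrow> ('n \<Rightarrow> 'b) \<Rightarrow> real^'n \<Rightarrow> 'b" where
  "interpK P0 P g0 g x =
     g0 + (\<Sum>m\<in>UNIV. (matrix_inv (affA P0 P) *v (x - P0)) $ m *\<^sub>R (g m - g0))"

definition pderiv_at :: "(real^'n \<Rightarrow> 'b::real_normed_vector) \<Rightarrow> real^'n \<Rightarrow> 'n \<Rightarrow> 'b" where
  "pderiv_at f x j = frechet_derivative f (at x) (axis j 1)"

definition inball_diam :: "(real^'n) set \<Rightarrow> real" where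
  "inball_diam K = Sup {2 * r | r c. 0 < r \<and> ball c r \<subseteq> K}"

end

theory Submission
  imports Defs
begin

lemma diag_left: "(diag_mat l ** C) $ i $ j = l$i * C$i$j"
proof -
  have "(diag_mat l ** C) $ i $ j = (\<Sum>k\<in>UNIV. (if i = k then l$i else 0) * C$k$j)"
    by (simp add: matrix_matrix_mult_def diag_mat_def)
  also have "\<dots> = (\<Sum>k\<in>UNIV. (if k = i then l$i * C$i$j else 0))"
    by (rule sum.cong) auto
  finally show ?thesis by simp
qed

lemma diag_right: "(C ** diag_mat l) $ i $ j = C$i$j * l$j"
proof -
  have "(C ** diag_mat l) $ i $ j = (\<Sum>k\<in>UNIV. C$i$k * (if k = j then l$k else 0))"
    by (simp add: matrix_matrix_mult_def diag_mat_def)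
  also have "\<dots> = (\<Sum>k\<in>UNIV. (if k = j then C$i$j * l$j else 0))"
    by (rule sum.cong) auto
  finally show ?thesis by simp
qed

lemma MD_entry: "(Q ** diag_mat d ** transpose R) $ i $ j = (\<Sum>k\<in>UNIV. Q$i$k * d$k * R$j$k)"
  by (simp add: matrix_matrix_mult_def[of "Q ** diag_mat d"] diag_right transpose_def matrix_matrix_mult_def[of _ "transpose R"])

lemma diag_mult: "diag_mat a ** diag_mat b = diag_mat (\<chi> i. a$i * b$i)"
  by (simp add: vec_eq_iff diag_left) (simp add: diag_mat_def)

lemma matrix_inv_props:
  fixes A :: "real^'n^'n"
  assumes "invertible A"
  shows "A ** matrix_inv A = mat 1 \<and> matrix_inv A ** A = mat 1"
  using assms unfolding invertible_def matrix_inv_def by (rule someI_ex)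

lemma matrix_inv_unique:
  fixes A B :: "real^'n^'n"
  assumes "A ** B = mat 1" "B ** A = mat 1"
  shows "matrix_inv A = B"
proof -
  have inv: "invertible A" using assms unfolding invertible_def by blast
  have "B = B ** (A ** matrix_inv A)" using matrix_inv_props[OF inv] by simp
  also have "\<dots> = matrix_inv A" by (simp add: matrix_mul_assoc assms)
  finally show ?thesis by simp
qed

lemma matrix_inv_transpose:
  fixes A :: "real^'n^'n"
  assumes "invertible A"
  shows "matrix_inv (transpose A) = transpose (matrix_inv A)"
  apply (rule matrix_inv_unique)
  using matrix_inv_props[OF assms] by (simp_all add: matrix_transpose_mul[symmetric])


definition MD :: "real^'n^'n \<Rightarrow> real^'n \<Rightarrow> real^'n^'n" where
  "MD Q d = Q ** diag_mat d ** transpose Q"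

lemma MD_entry': "MD Q d $ i $ j = (\<Sum>k\<in>UNIV. Q$i$k * d$k * Q$j$k)"
  by (simp add: MD_def MD_entry)

lemma MD_add: "MD Q a + MD Q b = MD Q (a + b)"
  by (simp add: vec_eq_iff MD_entry' sum.distrib[symmetric] algebra_simps)

lemma MD_diff: "MD Q a - MD Q b = MD Q (a - b)"
  by (simp add: vec_eq_iff MD_entry' sum_subtractf[symmetric] algebra_simps)

lemma MD_uminus: "- MD Q a = MD Q (- a)"
  by (simp add: vec_eq_iff MD_entry' sum_negf[symmetric] algebra_simps)

lemma MD_scaleR: "c *\<^sub>R MD Q a = MD Q (c *\<^sub>R a)"
  by (simp add: vec_eq_iff MD_entry' sum_distrib_left algebra_simps)

lemma MD_mult:
  assumes "orthogonal_matrix Q"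
  shows "MD Q a ** MD Q b = MD Q (\<chi> i. a$i * b$i)"
proof -
  have QQ: "transpose Q ** Q = mat 1" using assms by (simp add: orthogonal_matrix_def)
  have "MD Q a ** MD Q b = Q ** diag_mat a ** (transpose Q ** Q) ** diag_mat b ** transpose Q"
    by (simp add: MD_def matrix_mul_assoc)
  also have "\<dots> = Q ** (diag_mat a ** diag_mat b) ** transpose Q"
    by (simp add: QQ matrix_mul_assoc)
  finally show ?thesis by (simp add: diag_mult MD_def)
qed

lemma MD_one:
  assumes "orthogonal_matrix Q"
  shows "MD Q (\<chi> i. 1) = mat 1"
proof -
  have "diag_mat (\<chi> i. 1) = (mat 1 :: real^'n^'n)"
    by (simp add: vec_eq_iff diag_mat_def mat_def)
  then have "MD Q (\<chi> i. 1) = Q ** transpose Q" unfolding MD_def by (metis matrix_mul_rid)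
  then show ?thesis using assms by (simp add: orthogonal_matrix_def)
qed

lemma MD_transfer:
  assumes Q: "orthogonal_matrix Q" and R: "orthogonal_matrix R"
    and h: "\<And>k l. (transpose Q ** R)$k$l \<noteq> 0 \<Longrightarrow> a$k = b$l"
  shows "MD Q a = MD R b"
proof -
  define C where "C = transpose Q ** R"
  have "\<forall>k l. a$k * C$k$l = C$k$l * b$l"
  proof (intro allI)
    fix k l show "a$k * C$k$l = C$k$l * b$l"
      using h[of k l] unfolding C_def by (cases "(transpose Q ** R)$k$l = 0") auto
  qed
  then have comm: "diag_mat a ** C = C ** diag_mat b"
    by (simp add: vec_eq_iff diag_left diag_right)
  have RR: "R ** transpose R = mat 1" and QQ: "Q ** transpose Q = mat 1"
    using Q R by (simp_all add: orthogonal_matrix_def)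
  have CR: "C ** transpose R = transpose Q" unfolding C_def
    by (simp add: matrix_mul_assoc[symmetric] RR)
  have "MD Q a = Q ** diag_mat a ** (C ** transpose R)" by (simp add: MD_def CR)
  also have "\<dots> = Q ** (diag_mat a ** C) ** transpose R" by (simp add: matrix_mul_assoc)
  also have "\<dots> = (Q ** C) ** diag_mat b ** transpose R" by (simp add: comm matrix_mul_assoc)
  also have "Q ** C = R" unfolding C_def by (simp add: matrix_mul_assoc QQ)
  finally show ?thesis by (simp add: MD_def)
qed

lemma MD_transfer_conv:
  assumes Q: "orthogonal_matrix Q" and R: "orthogonal_matrix R"
    and eq: "MD Q a = MD R b" and nz: "(transpose Q ** R)$k$l \<noteq> 0"
  shows "a$k = b$l"
proof -
  define C where "C = transpose Q ** R"
  have RR: "transpose R ** R = mat 1" and QQ: "transpose Q ** Q = mat 1"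
    using Q R by (simp_all add: orthogonal_matrix_def)
  have "transpose Q ** MD Q a ** R = diag_mat a ** C"
    unfolding MD_def C_def by (simp add: matrix_mul_assoc QQ)
  moreover have "transpose Q ** MD R b ** R = C ** diag_mat b"
    unfolding MD_def C_def by (simp add: matrix_mul_assoc[symmetric] RR)
  ultimately have "diag_mat a ** C = C ** diag_mat b" using eq by simp
  then have "(diag_mat a ** C)$k$l = (C ** diag_mat b)$k$l" by simp
  then have "a$k * C$k$l = C$k$l * b$l" by (simp add: diag_left diag_right)
  then show ?thesis using nz unfolding C_def by simp
qed

lemma matfun_MD:
  assumes Q: "orthogonal_matrix Q"
  shows "matfun f (MD Q l) = MD Q (\<chi> i. f (l$i))"
proof -
  let ?P = "\<lambda>M. \<exists>R m. orthogonal_matrix R \<and> MD Q l = R ** diag_mat m ** transpose R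
                     \<and> M = R ** diag_mat (\<chi> i. f (m $ i)) ** transpose R"
  have ex: "?P (MD Q (\<chi> i. f (l$i)))" using Q by (auto simp: MD_def)
  then have "?P (matfun f (MD Q l))" unfolding matfun_def by (rule someI)
  then obtain R m where R: "orthogonal_matrix R" and e: "MD Q l = MD R m"
    and M: "matfun f (MD Q l) = MD R (\<chi> i. f (m $ i))" by (auto simp: MD_def)
  have "MD Q (\<chi> i. f (l$i)) = MD R (\<chi> i. f (m $ i))"
    by (rule MD_transfer[OF Q R]) (simp add: MD_transfer_conv[OF Q R e])
  then show ?thesis using M by simp
qed

lemma sym_dot:
  fixes A :: "real^'n^'n"
  assumes "symmetric_mat A"
  shows "(A *v x) \<bullet> y = x \<bullet> (A *v y)"
proof -
  have "A *v x = x v* A" using assms unfolding symmetric_mat_def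
    by (metis vector_transpose_matrix)
  then show ?thesis by (simp add: dot_lmul_matrix)
qed

lemma lagrange_aux:
  fixes c K :: real
  assumes "\<And>t. 2 * t * c \<le> t^2 * K"
  shows "c = 0"
proof -
  define M where "M = \<bar>K\<bar> + 1"
  have pos: "M > 0" by (simp add: M_def)
  define t where "t = c / M"
  have "2 * t * c \<le> t^2 * K" by (rule assms)
  also have "\<dots> \<le> t^2 * \<bar>K\<bar>" by (simp add: mult_left_mono)
  finally have "2 * c^2 / M \<le> c^2 * \<bar>K\<bar> / M^2"
    by (simp add: t_def power2_eq_square power_divide)
  then have "2 * c^2 / M * M^2 \<le> c^2 * \<bar>K\<bar> / M^2 * M^2"
    by (rule mult_right_mono) simp
  moreover have "2 * c^2 / M * M^2 = 2 * c^2 * M" using pos by (simp add: power2_eq_square)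
  moreover have "c^2 * \<bar>K\<bar> / M^2 * M^2 = c^2 * \<bar>K\<bar>" using pos by simp
  ultimately have "2 * c^2 * M \<le> c^2 * \<bar>K\<bar>" by simp
  then have "c^2 * (\<bar>K\<bar> + 2) \<le> 0" by (simp add: M_def algebra_simps)
  moreover have "c^2 * (\<bar>K\<bar> + 2) \<ge> 0" by simp
  ultimately have "c^2 * (\<bar>K\<bar> + 2) = 0" by linarith
  moreover have "\<bar>K\<bar> + 2 > 0" by simp
  ultimately show ?thesis by simp
qed

lemma spectral_sub:
  fixes A :: "real^'n^'n"
  assumes sym: "symmetric_mat A"
  shows "subspace S \<Longrightarrow> (\<forall>x\<in>S. A *v x \<in> S) \<Longrightarrow> dim S = k \<Longrightarrow>
    \<exists>B. finite B \<and> B \<subseteq> S \<and> card B = k \<and> pairwise orthogonal B \<and>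
        (\<forall>v\<in>B. norm v = 1 \<and> (\<exists>\<mu>. A *v v = \<mu> *\<^sub>R v))"
proof (induction k arbitrary: S)
  case 0
  then show ?case by (intro exI[of _ "{}"]) auto
next
  case (Suc k)
  note subS = Suc.prems(1) and inv = Suc.prems(2) and dimS = Suc.prems(3)
  define q where "q = (\<lambda>x. x \<bullet> (A *v x))"
  obtain x0 where x0: "x0 \<in> S" "x0 \<noteq> 0"
  proof -
    have "\<not> S \<subseteq> {0}"
    proof
      assume "S \<subseteq> {0}"
      then have "dim S = 0" by simp
      with dimS show False by simp
    qed
    then show ?thesis using that by blast
  qed
  define U where "U = S \<inter> sphere 0 1"
  have cU: "compact U" unfolding U_def
    by (intro closed_Int_compact closed_subspace subS compact_sphere)
  have "x0 /\<^sub>R norm x0 \<in> U" unfolding U_def using x0 subS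
    by (simp add: subspace_scale)
  then have neU: "U \<noteq> {}" by blast
  have cq: "continuous_on U q" unfolding q_def
    by (intro continuous_intros linear_continuous_on matrix_vector_mul_linear)
  obtain v where vU: "v \<in> U" and vmax: "\<And>y. y \<in> U \<Longrightarrow> q y \<le> q v"
    using continuous_attains_sup[OF cU neU cq] by blast
  have vS: "v \<in> S" and nv: "norm v = 1" using vU by (auto simp: U_def)
  have vv: "v \<bullet> v = 1" using nv by (simp add: norm_eq_1)
  have qhom: "q (c *\<^sub>R x) = c^2 * q x" for c x
    by (simp add: q_def matrix_vector_mult_scaleR power2_eq_square)
  have qle: "q x \<le> q v * (x \<bullet> x)" if "x \<in> S" for x
  proof (cases "x = 0")
    case True then show ?thesis by (simp add: q_def)
  next
    case False
    have "(1 / norm x) *\<^sub>R x \<in> U" unfolding U_def using that subS False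
      by (simp add: subspace_scale)
    then have "q ((1 / norm x) *\<^sub>R x) \<le> q v" by (rule vmax)
    then have "q x / (norm x)^2 \<le> q v" by (simp add: qhom power2_eq_square divide_inverse mult.commute)
    then have "q x \<le> q v * (norm x)^2" using False by (simp add: field_simps)
    then show ?thesis by (simp add: power2_norm_eq_inner)
  qed
  have orth: "(A *v v) \<bullet> w = 0" if wS: "w \<in> S" and wv: "w \<bullet> v = 0" for w
  proof (rule lagrange_aux[where K = "q v * (w \<bullet> w) - q w"])
    fix t :: real
    have "v + t *\<^sub>R w \<in> S" using vS wS subS by (simp add: subspace_add subspace_scale)
    then have h1: "q (v + t *\<^sub>R w) \<le> q v * ((v + t *\<^sub>R w) \<bullet> (v + t *\<^sub>R w))" by (rule qle)
    have h2: "q (v + t *\<^sub>R w) = q v + 2 * t * ((A *v v) \<bullet> w) + t^2 * q w"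
      by (simp add: q_def matrix_vector_right_distrib matrix_vector_mult_scaleR inner_add
          sym_dot[OF sym] inner_commute[of v "A *v w"] power2_eq_square algebra_simps)
    have h3: "(v + t *\<^sub>R w) \<bullet> (v + t *\<^sub>R w) = 1 + t^2 * (w \<bullet> w)"
      using vv wv by (simp add: inner_add inner_commute[of v w] power2_eq_square algebra_simps)
    have "q v + 2 * t * ((A *v v) \<bullet> w) + t^2 * q w \<le> q v * (1 + t^2 * (w \<bullet> w))"
      using h1 unfolding h2 h3 .
    then show "2 * t * ((A *v v) \<bullet> w) \<le> t^2 * (q v * (w \<bullet> w) - q w)"
      by (simp add: algebra_simps)
  qed
  define \<mu> where "\<mu> = q v"
  have eig: "A *v v = \<mu> *\<^sub>R v"
  proof -
    define u where "u = A *v v - \<mu> *\<^sub>R v"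
    have uS: "u \<in> S" unfolding u_def using inv vS subS by (simp add: subspace_diff subspace_scale)
    have uv: "u \<bullet> v = 0" unfolding u_def \<mu>_def q_def using vv
      by (simp add: inner_diff_left inner_commute[of "A *v v" v])
    have "(A *v v) \<bullet> u = 0" by (rule orth[OF uS uv])
    then have "u \<bullet> u = 0" using uv unfolding u_def
      by (simp add: inner_diff_left inner_commute)
    then show ?thesis unfolding u_def by simp
  qed
  define S' where "S' = {x \<in> S. x \<bullet> v = 0}"
  have subS': "subspace S'" unfolding S'_def using subS
    by (auto simp: subspace_def inner_add_left)
  have invS': "\<forall>x\<in>S'. A *v x \<in> S'"
  proof
    fix x assume "x \<in> S'"
    then have xS: "x \<in> S" and xv: "x \<bullet> v = 0" by (auto simp: S'_def)
    have "(A *v x) \<bullet> v = x \<bullet> (A *v v)" by (rule sym_dot[OF sym])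
    also have "\<dots> = 0" using xv by (simp add: eig)
    finally show "A *v x \<in> S'" using inv xS by (simp add: S'_def)
  qed
  have vnS': "v \<notin> span S'"
  proof
    assume "v \<in> span S'"
    then have "v \<in> S'" using span_eq_iff subS' by blast
    then show False using vv by (simp add: S'_def)
  qed
  have Seq: "S = span (insert v S')"
  proof
    show "S \<subseteq> span (insert v S')"
    proof
      fix x assume xS: "x \<in> S"
      define y where "y = x - (x \<bullet> v) *\<^sub>R v"
      have "y \<in> S'" unfolding S'_def y_def using xS vS subS vv
        by (simp add: subspace_diff subspace_scale inner_diff_left)
      then have "y \<in> span (insert v S')" by (simp add: span_base)
      moreover have "v \<in> span (insert v S')" by (simp add: span_base)
      ultimately have "y + (x \<bullet> v) *\<^sub>R v \<in> span (insert v S')"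
        by (simp add: span_add span_mul)
      then show "x \<in> span (insert v S')" by (simp add: y_def)
    qed
    show "span (insert v S') \<subseteq> S"
      by (rule span_minimal) (use vS subS in \<open>auto simp: S'_def\<close>)
  qed
  have "dim S = dim S' + 1"
    using Seq vnS' by (metis dim_insert dim_span)
  then have dimS': "dim S' = k" using dimS by simp
  obtain B where B: "finite B" "B \<subseteq> S'" "card B = k" "pairwise orthogonal B"
    "\<forall>v\<in>B. norm v = 1 \<and> (\<exists>\<mu>. A *v v = \<mu> *\<^sub>R v)"
    using Suc.IH[OF subS' invS' dimS'] by blast
  have vnB: "v \<notin> B" using B(2) vv by (auto simp: S'_def)
  show ?case
  proof (intro exI[of _ "insert v B"] conjI)
    show "finite (insert v B)" using B by simp
    show "insert v B \<subseteq> S" using B vS by (auto simp: S'_def)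
    show "card (insert v B) = Suc k" using B vnB by simp
    show "pairwise orthogonal (insert v B)"
      using B(2,4) by (auto simp: pairwise_insert orthogonal_def S'_def inner_commute)
    show "\<forall>w\<in>insert v B. norm w = 1 \<and> (\<exists>\<mu>. A *v w = \<mu> *\<^sub>R w)"
      using B(5) nv eig by blast
  qed
qed


lemma spectral:
  fixes A :: "real^'n^'n"
  assumes sym: "symmetric_mat A"
  shows "\<exists>Q l. orthogonal_matrix Q \<and> A = MD Q l"
proof -
  have "dim (UNIV :: (real^'n) set) = CARD('n)" by simp
  then obtain B where B: "finite B" "card B = CARD('n)" "pairwise orthogonal B"
    "\<forall>v\<in>B. norm v = 1 \<and> (\<exists>\<mu>. A *v v = \<mu> *\<^sub>R v)"
    using spectral_sub[OF sym subspace_UNIV] by blast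
  obtain e where e: "bij_betw e (UNIV::'n set) B"
    using finite_same_card_bij[of "UNIV::'n set" B] B by auto
  obtain mu where mu: "\<And>v. v \<in> B \<Longrightarrow> A *v v = mu v *\<^sub>R v"
    using B(4) by metis
  have eB: "e k \<in> B" for k using e by (auto simp: bij_betw_def)
  have einj: "e k = e l \<Longrightarrow> k = l" for k l using e by (auto simp: bij_betw_def inj_on_def)
  define Q :: "real^'n^'n" where "Q = (\<chi> r k. e k $ r)"
  define l :: "real^'n" where "l = (\<chi> k. mu (e k))"
  have dotQ: "(transpose Q ** Q) $ k $ m = e k \<bullet> e m" for k m
    by (simp add: Q_def matrix_matrix_mult_def transpose_def inner_vec_def)
  have "transpose Q ** Q = mat 1"
  proof (simp add: vec_eq_iff dotQ, intro allI)
    fix k m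
    show "e k \<bullet> e m = mat 1 $ k $ m"
    proof (cases "k = m")
      case True
      then show ?thesis using B(4) eB[of k] by (simp add: mat_def norm_eq_1)
    next
      case False
      then have "e k \<noteq> e m" using einj by blast
      then have "orthogonal (e k) (e m)" using B(3) eB by (auto simp: pairwise_def)
      then show ?thesis using False by (simp add: mat_def orthogonal_def)
    qed
  qed
  then have orthQ: "orthogonal_matrix Q" by (simp add: orthogonal_matrix)
  have AQ: "A ** Q = Q ** diag_mat l"
  proof -
    have "(A ** Q) $ r $ k = (Q ** diag_mat l) $ r $ k" for r k
    proof -
      have "(A ** Q) $ r $ k = (A *v e k) $ r"
        by (simp add: Q_def matrix_matrix_mult_def matrix_vector_mult_def)
      also have "\<dots> = mu (e k) * e k $ r" using mu[OF eB[of k]] by simp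
      finally show ?thesis by (simp add: diag_right Q_def l_def)
    qed
    then show ?thesis by (simp add: vec_eq_iff)
  qed
  have "MD Q l = A ** (Q ** transpose Q)"
    by (simp add: MD_def AQ[symmetric] matrix_mul_assoc)
  also have "\<dots> = A" using orthQ by (simp add: orthogonal_matrix_def)
  finally show ?thesis using orthQ by metis
qed

lemma frob_MD:
  "frob (MD Q a) (MD R b) = (\<Sum>k\<in>UNIV. \<Sum>l\<in>UNIV. ((transpose Q ** R)$k$l)^2 * a$k * b$l)"
proof -
  have "frob (MD Q a) (MD R b) = (\<Sum>i\<in>UNIV. \<Sum>j\<in>UNIV. \<Sum>k\<in>UNIV. \<Sum>l\<in>UNIV.
      Q$i$k * a$k * Q$j$k * (R$i$l * b$l * R$j$l))"
    by (simp add: frob_def MD_entry' sum_product)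
  also have "\<dots> = (\<Sum>i\<in>UNIV. \<Sum>k\<in>UNIV. \<Sum>j\<in>UNIV. \<Sum>l\<in>UNIV.
      Q$i$k * a$k * Q$j$k * (R$i$l * b$l * R$j$l))"
    by (rule sum.cong[OF refl], rule sum.swap)
  also have "\<dots> = (\<Sum>k\<in>UNIV. \<Sum>i\<in>UNIV. \<Sum>j\<in>UNIV. \<Sum>l\<in>UNIV.
      Q$i$k * a$k * Q$j$k * (R$i$l * b$l * R$j$l))"
    by (rule sum.swap)
  also have "\<dots> = (\<Sum>k\<in>UNIV. \<Sum>i\<in>UNIV. \<Sum>l\<in>UNIV. \<Sum>j\<in>UNIV.
      Q$i$k * a$k * Q$j$k * (R$i$l * b$l * R$j$l))"
    by (rule sum.cong[OF refl], rule sum.cong[OF refl], rule sum.swap)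
  also have "\<dots> = (\<Sum>k\<in>UNIV. \<Sum>l\<in>UNIV. \<Sum>i\<in>UNIV. \<Sum>j\<in>UNIV.
      Q$i$k * a$k * Q$j$k * (R$i$l * b$l * R$j$l))"
    by (rule sum.cong[OF refl], rule sum.swap)
  also have "\<dots> = (\<Sum>k\<in>UNIV. \<Sum>l\<in>UNIV. ((transpose Q ** R)$k$l)^2 * a$k * b$l)"
    by (simp add: matrix_matrix_mult_def transpose_def power2_eq_square sum_product
        sum_distrib_left sum_distrib_right algebra_simps)
  finally show ?thesis .
qed

lemma trace_MD:
  assumes "orthogonal_matrix Q"
  shows "trace (MD Q a) = (\<Sum>k\<in>UNIV. a$k)"
proof -
  have col: "(\<Sum>i\<in>UNIV. Q$i$k * Q$i$k) = 1" for k
  proof -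
    have "(transpose Q ** Q) $ k $ k = 1" using assms by (simp add: orthogonal_matrix mat_def)
    then show ?thesis by (simp add: matrix_matrix_mult_def transpose_def)
  qed
  have "trace (MD Q a) = (\<Sum>i\<in>UNIV. \<Sum>k\<in>UNIV. Q$i$k * a$k * Q$i$k)"
    by (simp add: trace_def MD_entry')
  also have "\<dots> = (\<Sum>k\<in>UNIV. \<Sum>i\<in>UNIV. Q$i$k * a$k * Q$i$k)" by (rule sum.swap)
  also have "\<dots> = (\<Sum>k\<in>UNIV. a$k * (\<Sum>i\<in>UNIV. Q$i$k * Q$i$k))"
    by (simp add: sum_distrib_left algebra_simps)
  finally show ?thesis by (simp add: col)
qed

lemma orth_rows:
  assumes "orthogonal_matrix C"
  shows "(\<Sum>l\<in>UNIV. (C$k$l)^2) = 1" "(\<Sum>k\<in>UNIV. (C$k$l)^2) = 1"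
proof -
  have "(C ** transpose C) $ k $ k = 1" using assms by (simp add: orthogonal_matrix_def mat_def)
  then show "(\<Sum>l\<in>UNIV. (C$k$l)^2) = 1"
    by (simp add: matrix_matrix_mult_def transpose_def power2_eq_square)
  have "(transpose C ** C) $ l $ l = 1" using assms by (simp add: orthogonal_matrix_def mat_def)
  then show "(\<Sum>k\<in>UNIV. (C$k$l)^2) = 1"
    by (simp add: matrix_matrix_mult_def transpose_def power2_eq_square)
qed

definition gg :: "real \<Rightarrow> real \<Rightarrow> real" where "gg \<delta> s = s - 1 / beta_d \<delta> s"
definition FF :: "real \<Rightarrow> real \<Rightarrow> real" where "FF \<delta> s = f_d \<delta> s + ln (beta_d \<delta> s)"

lemma ln_lower: "0 < (a::real) \<Longrightarrow> 0 < (b::real) \<Longrightarrow> 1 - a / b \<le> ln b - ln a"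
proof -
  assume a: "0 < a" and b: "0 < b"
  have "ln (a / b) \<le> a / b - 1" by (rule ln_le_minus_one) (use a b in simp)
  then show ?thesis using a b by (simp add: ln_div)
qed

lemma ln_upper: "0 < (a::real) \<Longrightarrow> 0 < (b::real) \<Longrightarrow> ln b - ln a \<le> b / a - 1"
proof -
  assume a: "0 < a" and b: "0 < b"
  have "ln (b / a) \<le> b / a - 1" by (rule ln_le_minus_one) (use a b in simp)
  then show ?thesis using a b by (simp add: ln_div)
qed

lemma scalar_bounds:
  assumes d: "0 < \<delta>"
  shows "beta_d \<delta> a * (gg \<delta> b - gg \<delta> a) \<le> FF \<delta> b - FF \<delta> a \<and>
         FF \<delta> b - FF \<delta> a \<le> beta_d \<delta> b * (gg \<delta> b - gg \<delta> a)"
proof -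
  consider "\<delta> \<le> a" "\<delta> \<le> b" | "a < \<delta>" "b < \<delta>" | "a < \<delta>" "\<delta> \<le> b" | "\<delta> \<le> a" "b < \<delta>"
    by linarith
  then show ?thesis
  proof cases
    case 1
    then have a: "0 < a" and b: "0 < b" using d by auto
    have e: "beta_d \<delta> a = a" "beta_d \<delta> b = b" "f_d \<delta> a = a^2/2" "f_d \<delta> b = b^2/2"
      using 1 by (auto simp: beta_d_def f_d_def)
    have l1: "1 - a / b \<le> ln b - ln a" and l2: "ln b - ln a \<le> b / a - 1"
      using ln_lower[OF a b] ln_upper[OF a b] .
    have x1: "a * (b - 1/b - (a - 1/a)) = a*b - a/b - a^2 + 1" using a b
      by (simp add: field_simps power2_eq_square)
    have x2: "b * (b - 1/b - (a - 1/a)) = b^2 - 1 - a*b + b/a" using a b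
      by (simp add: field_simps power2_eq_square)
    have sq: "0 \<le> (b - a)^2" by simp
    show ?thesis unfolding gg_def FF_def e x1 x2
      using l1 l2 sq by (simp add: power2_eq_square algebra_simps) 
  next
    case 2
    have e: "beta_d \<delta> a = \<delta>" "beta_d \<delta> b = \<delta>" "f_d \<delta> a = \<delta>*a - \<delta>^2/2" "f_d \<delta> b = \<delta>*b - \<delta>^2/2"
      using 2 by (auto simp: beta_d_def f_d_def)
    show ?thesis unfolding gg_def FF_def e by (simp add: algebra_simps)
  next
    case 3
    then have b: "0 < b" using d by auto
    have e: "beta_d \<delta> a = \<delta>" "beta_d \<delta> b = b" "f_d \<delta> a = \<delta>*a - \<delta>^2/2" "f_d \<delta> b = b^2/2"
      using 3 by (auto simp: beta_d_def f_d_def)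
    have l1: "1 - \<delta> / b \<le> ln b - ln \<delta>" and l2: "ln b - ln \<delta> \<le> b / \<delta> - 1"
      using ln_lower[OF d b] ln_upper[OF d b] .
    have x1: "\<delta> * (b - 1/b - (a - 1/\<delta>)) = \<delta>*b - \<delta>/b - \<delta>*a + 1" using d b
      by (simp add: field_simps)
    have x2: "b * (b - 1/b - (a - 1/\<delta>)) = b^2 - 1 - a*b + b/\<delta>" using d b
      by (simp add: field_simps power2_eq_square)
    have sq: "0 \<le> (b - \<delta>)^2" by simp
    have m: "a * (b - \<delta>) \<le> \<delta> * (b - \<delta>)" using 3 by (intro mult_right_mono) auto
    show ?thesis unfolding gg_def FF_def e x1 x2
      using l1 l2 sq m by (simp add: power2_eq_square algebra_simps) 
  next
    case 4
    then have a: "0 < a" using d by auto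
    have e: "beta_d \<delta> a = a" "beta_d \<delta> b = \<delta>" "f_d \<delta> a = a^2/2" "f_d \<delta> b = \<delta>*b - \<delta>^2/2"
      using 4 by (auto simp: beta_d_def f_d_def)
    have l1: "1 - \<delta> / a \<le> ln a - ln \<delta>" and l2: "ln a - ln \<delta> \<le> a / \<delta> - 1"
      using ln_lower[OF d a] ln_upper[OF d a] .
    have x1: "a * (b - 1/\<delta> - (a - 1/a)) = a*b - a/\<delta> - a^2 + 1" using d a
      by (simp add: field_simps power2_eq_square)
    have x2: "\<delta> * (b - 1/\<delta> - (a - 1/a)) = \<delta>*b - 1 - \<delta>*a + \<delta>/a" using d a
      by (simp add: field_simps)
    have sq: "0 \<le> (a - \<delta>)^2" by simp
    have m: "b * (a - \<delta>) \<le> \<delta> * (a - \<delta>)" using 4 by (intro mult_right_mono) auto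
    show ?thesis unfolding gg_def FF_def e x1 x2
      using l1 l2 sq m by (simp add: power2_eq_square algebra_simps) 
  qed
qed

lemma beta_pos: "0 < \<delta> \<Longrightarrow> 0 < beta_d \<delta> s"
  by (simp add: beta_d_def)

lemma beta_ne [simp]: "0 < \<delta> \<Longrightarrow> beta_d \<delta> s \<noteq> 0"
  by (simp add: beta_d_def)

lemma beta_mono: "s \<le> t \<Longrightarrow> beta_d \<delta> s \<le> beta_d \<delta> t"
  by (simp add: beta_d_def)

lemma gg_strict: "0 < \<delta> \<Longrightarrow> s < t \<Longrightarrow> gg \<delta> s < gg \<delta> t"
proof -
  assume d: "0 < \<delta>" and st: "s < t"
  have "1 / beta_d \<delta> t \<le> 1 / beta_d \<delta> s"
    using beta_mono[of s t \<delta>] st beta_pos[OF d] by (intro divide_left_mono) (auto intro: mult_pos_pos)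
  then show ?thesis using st by (simp add: gg_def)
qed

lemma dd_pos:
  assumes d: "0 < \<delta>" and ne: "beta_d \<delta> a \<noteq> beta_d \<delta> b"
  shows "0 < (beta_d \<delta> b - beta_d \<delta> a) * (gg \<delta> b - gg \<delta> a)"
proof (cases "a < b")
  case True
  then have "beta_d \<delta> a < beta_d \<delta> b" using beta_mono[of a b \<delta>] ne by simp
  moreover have "gg \<delta> a < gg \<delta> b" using gg_strict[OF d True] .
  ultimately show ?thesis by simp
next
  case False
  then have ba: "b \<le> a" by simp
  then have "b < a" using ne by (cases "a = b") auto
  then have "beta_d \<delta> b < beta_d \<delta> a" using beta_mono[of b a \<delta>] ne by simp
  moreover have "gg \<delta> b < gg \<delta> a" using gg_strict[OF d \<open>b < a\<close>] .
  ultimately show ?thesis by (simp add: mult_neg_neg)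
qed

lemma dd_nonneg:
  assumes d: "0 < \<delta>"
  shows "0 \<le> (beta_d \<delta> b - beta_d \<delta> a) * (gg \<delta> b - gg \<delta> a)"
  using scalar_bounds[OF d, of a b] by (simp add: algebra_simps)

definition nn :: "real \<Rightarrow> real \<Rightarrow> real \<Rightarrow> real" where
  "nn \<delta> a b = FF \<delta> a - FF \<delta> b + beta_d \<delta> b * (gg \<delta> b - gg \<delta> a)"

definition ddd :: "real \<Rightarrow> real \<Rightarrow> real \<Rightarrow> real" where
  "ddd \<delta> a b = (beta_d \<delta> b - beta_d \<delta> a) * (gg \<delta> b - gg \<delta> a)"

lemma nn_bounds:
  assumes d: "0 < \<delta>"
  shows "0 \<le> nn \<delta> a b" "nn \<delta> a b \<le> ddd \<delta> a b"
  using scalar_bounds[OF d, of a b] by (simp_all add: nn_def ddd_def algebra_simps)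

lemma nn_zero:
  assumes d: "0 < \<delta>" and "beta_d \<delta> a = beta_d \<delta> b"
  shows "nn \<delta> a b = 0"
  using scalar_bounds[OF d, of a b] assms(2) by (simp add: nn_def algebra_simps)

definition vmap :: "(real \<Rightarrow> real) \<Rightarrow> real^'n \<Rightarrow> real^'n" where
  "vmap f x = (\<chi> k. f (x$k))"

lemma betaM_MD: "orthogonal_matrix Q \<Longrightarrow> betaM \<delta> (MD Q x) = MD Q (vmap (beta_d \<delta>) x)"
  by (simp add: betaM_def matfun_MD vmap_def)

lemma betaInvM_MD:
  assumes Q: "orthogonal_matrix Q" and d: "0 < \<delta>"
  shows "betaInvM \<delta> (MD Q x) = MD Q (vmap (\<lambda>s. 1 / beta_d \<delta> s) x)"
proof -
  have ne: "beta_d \<delta> s \<noteq> 0" for s using beta_pos[OF d, of s] by simp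
  show ?thesis unfolding betaInvM_def betaM_MD[OF Q]
    by (rule matrix_inv_unique) (simp_all add: MD_mult[OF Q] vmap_def ne MD_one[OF Q])
qed

lemma trace_matfun_ln_betaInv:
  assumes Q: "orthogonal_matrix Q" and d: "0 < \<delta>"
  shows "trace (matfun ln (betaInvM \<delta> (MD Q x))) = - (\<Sum>k\<in>UNIV. ln (beta_d \<delta> (x$k)))"
  by (simp add: betaInvM_MD[OF Q d] matfun_MD[OF Q] trace_MD[OF Q] vmap_def ln_div
      sum_negf beta_pos[OF d] d)

lemma entropy_MD:
  assumes Q: "orthogonal_matrix Q" and d: "0 < \<delta>"
  shows "entropy_term \<delta> (MD Q x) = - (\<Sum>k\<in>UNIV. FF \<delta> (x$k))"
  by (simp add: entropy_term_def trace_matfun_ln_betaInv[OF Q d] matfun_MD[OF Q] trace_MD[OF Q]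
      FF_def sum.distrib)

lemma gM_MD:
  assumes Q: "orthogonal_matrix Q" and d: "0 < \<delta>"
  shows "MD Q x - betaInvM \<delta> (MD Q x) = MD Q (vmap (gg \<delta>) x)"
proof -
  have "x = vmap (\<lambda>s. s) x" by (simp add: vmap_def vec_eq_iff)
  then have "MD Q x - betaInvM \<delta> (MD Q x) = MD Q (vmap (\<lambda>s. s) x - vmap (\<lambda>s. 1 / beta_d \<delta> s) x)"
    by (metis MD_diff betaInvM_MD[OF Q d])
  also have "vmap (\<lambda>s. s) x - vmap (\<lambda>s. 1 / beta_d \<delta> s) x = vmap (gg \<delta>) x"
    by (simp add: vmap_def vec_eq_iff gg_def)
  finally show ?thesis .
qed

lemma frob_MD_same:
  assumes R: "orthogonal_matrix R"
  shows "frob (MD R a) (MD R b) = (\<Sum>l\<in>UNIV. a$l * b$l)"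
proof -
  have RR: "transpose R ** R = mat 1" using R by (simp add: orthogonal_matrix)
  have "frob (MD R a) (MD R b) = (\<Sum>k\<in>UNIV. \<Sum>l\<in>UNIV. (if k = l then a$k * b$l else 0))"
    unfolding frob_MD RR by (intro sum.cong refl) (simp add: mat_def)
  also have "\<dots> = (\<Sum>l\<in>UNIV. a$l * b$l)" by simp
  finally show ?thesis .
qed

lemma frob_sym: "frob A B = frob B A"
  by (simp add: frob_def mult.commute)

lemma frob_diff_right: "frob A (B - C) = frob A B - frob A C"
  by (simp add: frob_def algebra_simps sum_subtractf)

lemma frob_diff_left: "frob (A - B) C = frob A C - frob B C"
  by (simp add: frob_def algebra_simps sum_subtractf)

lemma frob_add_left: "frob (A + B) C = frob A C + frob B C"
  by (simp add: frob_def algebra_simps sum.distrib)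

lemma frob_scaleR_left: "frob (c *\<^sub>R A) C = c * frob A C"
  by (simp add: frob_def algebra_simps sum_distrib_left)

lemma frob_uminus_right: "frob A (- B) = - frob A B"
  by (simp add: frob_def sum_negf)

lemma frob_MD_swap:
  "frob (MD R a) (MD Q b) = (\<Sum>k\<in>UNIV. \<Sum>l\<in>UNIV. ((transpose Q ** R)$k$l)^2 * b$k * a$l)"
  unfolding frob_sym[of "MD R a"] by (rule frob_MD)

lemma colsum:
  assumes "orthogonal_matrix C"
  shows "(\<Sum>l\<in>UNIV. h l) = (\<Sum>k\<in>UNIV. \<Sum>l\<in>UNIV. (C$k$l)^2 * h l)"
proof -
  have "(\<Sum>k\<in>UNIV. \<Sum>l\<in>UNIV. (C$k$l)^2 * h l) = (\<Sum>l\<in>UNIV. \<Sum>k\<in>UNIV. (C$k$l)^2 * h l)"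
    by (rule sum.swap)
  also have "\<dots> = (\<Sum>l\<in>UNIV. (\<Sum>k\<in>UNIV. (C$k$l)^2) * h l)" by (simp add: sum_distrib_right)
  finally show ?thesis by (simp add: orth_rows[OF assms])
qed

lemma rowsum:
  assumes "orthogonal_matrix C"
  shows "(\<Sum>k\<in>UNIV. h k) = (\<Sum>k\<in>UNIV. \<Sum>l\<in>UNIV. (C$k$l)^2 * h k)"
  by (simp add: sum_distrib_right[symmetric] orth_rows[OF assms])

lemma num_den:
  assumes d: "0 < \<delta>" and Q: "orthogonal_matrix Q" and R: "orthogonal_matrix R"
  shows "lam_num \<delta> (MD Q x) (MD R y) =
           (\<Sum>k\<in>UNIV. \<Sum>l\<in>UNIV. ((transpose Q ** R)$k$l)^2 * nn \<delta> (x$k) (y$l))"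
    and "lam_den \<delta> (MD Q x) (MD R y) =
           (\<Sum>k\<in>UNIV. \<Sum>l\<in>UNIV. ((transpose Q ** R)$k$l)^2 * ddd \<delta> (x$k) (y$l))"
proof -
  define C where "C = transpose Q ** R"
  have Corth: "orthogonal_matrix C" unfolding C_def using Q R by (simp add: orthogonal_matrix_mul)
  define w where "w = (\<lambda>k l. (C$k$l)^2)"
  let ?X = "MD Q x" and ?Y = "MD R y"
  let ?bx = "vmap (beta_d \<delta>) x" and ?by = "vmap (beta_d \<delta>) y"
  let ?gx = "vmap (gg \<delta>) x" and ?gy = "vmap (gg \<delta>) y"
  have Dl: "Delta_i \<delta> ?X ?Y = MD R ?gy - MD Q ?gx"
  proof -
    have "Delta_i \<delta> ?X ?Y = (?Y - betaInvM \<delta> ?Y) - (?X - betaInvM \<delta> ?X)"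
      by (simp add: Delta_i_def algebra_simps)
    then show ?thesis by (simp add: gM_MD[OF Q d] gM_MD[OF R d])
  qed
  have bY: "betaM \<delta> ?Y = MD R ?by" and bX: "betaM \<delta> ?X = MD Q ?bx"
    by (simp_all add: betaM_MD Q R)
  have f1: "frob (MD R ?by) (MD R ?gy) = (\<Sum>k\<in>UNIV. \<Sum>l\<in>UNIV. w k l * (beta_d \<delta> (y$l) * gg \<delta> (y$l)))"
    unfolding frob_MD_same[OF R] w_def by (simp add: vmap_def) (rule colsum[OF Corth])
  have f2: "frob (MD R ?by) (MD Q ?gx) = (\<Sum>k\<in>UNIV. \<Sum>l\<in>UNIV. w k l * (gg \<delta> (x$k) * beta_d \<delta> (y$l)))"
    unfolding frob_MD_swap w_def C_def by (simp add: vmap_def mult.assoc)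
  have f3: "frob (MD Q ?bx) (MD R ?gy) = (\<Sum>k\<in>UNIV. \<Sum>l\<in>UNIV. w k l * (beta_d \<delta> (x$k) * gg \<delta> (y$l)))"
    unfolding frob_MD w_def C_def by (simp add: vmap_def mult.assoc)
  have f4: "frob (MD Q ?bx) (MD Q ?gx) = (\<Sum>k\<in>UNIV. \<Sum>l\<in>UNIV. w k l * (beta_d \<delta> (x$k) * gg \<delta> (x$k)))"
    unfolding frob_MD_same[OF Q] w_def by (simp add: vmap_def) (rule rowsum[OF Corth])
  have eY: "entropy_term \<delta> ?Y = - (\<Sum>k\<in>UNIV. \<Sum>l\<in>UNIV. w k l * FF \<delta> (y$l))"
    unfolding entropy_MD[OF R d] w_def using colsum[OF Corth, of "\<lambda>l. FF \<delta> (y$l)"] by simp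
  have eX: "entropy_term \<delta> ?X = - (\<Sum>k\<in>UNIV. \<Sum>l\<in>UNIV. w k l * FF \<delta> (x$k))"
    unfolding entropy_MD[OF Q d] w_def using rowsum[OF Corth, of "\<lambda>k. FF \<delta> (x$k)"] by simp
  have "lam_num \<delta> ?X ?Y = entropy_term \<delta> ?Y - entropy_term \<delta> ?X + frob (betaM \<delta> ?Y) (Delta_i \<delta> ?X ?Y)"
    by (simp add: lam_num_def entropy_term_def)
  also have "\<dots> = (\<Sum>k\<in>UNIV. \<Sum>l\<in>UNIV. w k l * nn \<delta> (x$k) (y$l))"
    unfolding bY Dl frob_diff_right f1 f2 eX eY
    by (simp add: nn_def algebra_simps sum.distrib sum_subtractf)
  finally show "lam_num \<delta> ?X ?Y = (\<Sum>k\<in>UNIV. \<Sum>l\<in>UNIV. ((transpose Q ** R)$k$l)^2 * nn \<delta> (x$k) (y$l))"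
    by (simp add: w_def C_def)
  have "lam_den \<delta> ?X ?Y = (\<Sum>k\<in>UNIV. \<Sum>l\<in>UNIV. w k l * ddd \<delta> (x$k) (y$l))"
    unfolding lam_den_def bY bX Dl frob_diff_right frob_diff_left f1 f2 f3 f4
    by (simp add: ddd_def algebra_simps sum.distrib sum_subtractf)
  then show "lam_den \<delta> ?X ?Y = (\<Sum>k\<in>UNIV. \<Sum>l\<in>UNIV. ((transpose Q ** R)$k$l)^2 * ddd \<delta> (x$k) (y$l))"
    by (simp add: w_def C_def)
qed

lemma double_sum_ge_term:
  fixes f :: "'a::finite \<Rightarrow> 'b::finite \<Rightarrow> real"
  assumes "\<And>k l. 0 \<le> f k l"
  shows "f k l \<le> (\<Sum>k\<in>UNIV. \<Sum>l\<in>UNIV. f k l)"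
proof -
  have "f k l \<le> (\<Sum>l\<in>UNIV. f k l)" by (rule member_le_sum) (auto intro: assms)
  also have "\<dots> \<le> (\<Sum>k\<in>UNIV. \<Sum>l\<in>UNIV. f k l)"
    by (rule member_le_sum) (auto intro: assms sum_nonneg)
  finally show ?thesis .
qed

lemma part1_pair:
  fixes B0 Bi :: "real^'n^'n"
  assumes d: "0 < \<delta>" and s0: "symmetric_mat B0" and si: "symmetric_mat Bi"
  shows "(betaM \<delta> Bi \<noteq> betaM \<delta> B0 \<longrightarrow>
            0 < lam_den \<delta> B0 Bi \<and> 0 \<le> lam \<delta> B0 Bi \<and> lam \<delta> B0 Bi \<le> 1)
       \<and> (betaM \<delta> Bi = betaM \<delta> B0 \<longrightarrow> lam_num \<delta> B0 Bi = 0)"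
proof -
  obtain Q x where Q: "orthogonal_matrix Q" and X: "B0 = MD Q x" using spectral[OF s0] by blast
  obtain R y where R: "orthogonal_matrix R" and Y: "Bi = MD R y" using spectral[OF si] by blast
  define C where "C = transpose Q ** R"
  have num: "lam_num \<delta> B0 Bi = (\<Sum>k\<in>UNIV. \<Sum>l\<in>UNIV. (C$k$l)^2 * nn \<delta> (x$k) (y$l))"
    unfolding X Y C_def by (rule num_den(1)[OF d Q R])
  have den: "lam_den \<delta> B0 Bi = (\<Sum>k\<in>UNIV. \<Sum>l\<in>UNIV. (C$k$l)^2 * ddd \<delta> (x$k) (y$l))"
    unfolding X Y C_def by (rule num_den(2)[OF d Q R])
  have bX: "betaM \<delta> B0 = MD Q (vmap (beta_d \<delta>) x)" and bY: "betaM \<delta> Bi = MD R (vmap (beta_d \<delta>) y)"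
    by (simp_all add: X Y betaM_MD Q R)
  have nn0: "0 \<le> (C$k$l)^2 * nn \<delta> (x$k) (y$l)" for k l using nn_bounds(1)[OF d] by simp
  have dd0: "0 \<le> (C$k$l)^2 * ddd \<delta> (x$k) (y$l)" for k l using dd_nonneg[OF d] by (simp add: ddd_def)
  show ?thesis
  proof (intro conjI impI)
    assume ne: "betaM \<delta> Bi \<noteq> betaM \<delta> B0"
    obtain k l where Ckl: "C$k$l \<noteq> 0" and bne: "beta_d \<delta> (x$k) \<noteq> beta_d \<delta> (y$l)"
    proof -
      have "\<not> (\<forall>k l. C$k$l \<noteq> 0 \<longrightarrow> beta_d \<delta> (x$k) = beta_d \<delta> (y$l))"
      proof
        assume h: "\<forall>k l. C$k$l \<noteq> 0 \<longrightarrow> beta_d \<delta> (x$k) = beta_d \<delta> (y$l)"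
        have "MD Q (vmap (beta_d \<delta>) x) = MD R (vmap (beta_d \<delta>) y)"
          by (rule MD_transfer[OF Q R]) (use h in \<open>simp add: vmap_def C_def\<close>)
        then show False using ne bX bY by simp
      qed
      then show ?thesis using that by blast
    qed
    have "0 < (C$k$l)^2 * ddd \<delta> (x$k) (y$l)"
      using Ckl dd_pos[OF d bne] by (simp add: ddd_def)
    also have "\<dots> \<le> lam_den \<delta> B0 Bi" unfolding den by (rule double_sum_ge_term[OF dd0])
    finally have dpos: "0 < lam_den \<delta> B0 Bi" .
    have n0: "0 \<le> lam_num \<delta> B0 Bi" unfolding num by (intro sum_nonneg nn0)
    have nd: "lam_num \<delta> B0 Bi \<le> lam_den \<delta> B0 Bi" unfolding num den
      by (intro sum_mono mult_left_mono nn_bounds(2)[OF d]) simp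
    show "0 < lam_den \<delta> B0 Bi" by (rule dpos)
    show "0 \<le> lam \<delta> B0 Bi" unfolding lam_def using n0 dpos by simp
    show "lam \<delta> B0 Bi \<le> 1" unfolding lam_def using nd dpos by simp
  next
    assume eq: "betaM \<delta> Bi = betaM \<delta> B0"
    have z: "(C$k$l)^2 * nn \<delta> (x$k) (y$l) = 0" for k l
    proof (cases "C$k$l = 0")
      case False
      have "vmap (beta_d \<delta>) x $ k = vmap (beta_d \<delta>) y $ l"
        by (rule MD_transfer_conv[OF Q R]) (use eq bX bY False C_def in auto)
      then show ?thesis by (simp add: vmap_def nn_zero[OF d])
    qed simp
    show "lam_num \<delta> B0 Bi = 0" unfolding num z by simp
  qed
qed

lemma frob_zero_left: "frob 0 B = 0"
  by (simp add: frob_def)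

lemma frob_sum_left: "frob (\<Sum>m\<in>S. f m) B = (\<Sum>m\<in>S. frob (f m) B)"
  by (induction S rule: infinite_finite_induct) (simp_all add: frob_add_left frob_zero_left)

lemma frob_sum_right: "frob B (\<Sum>m\<in>S. f m) = (\<Sum>m\<in>S. frob B (f m))"
  using frob_sum_left[of f S B] by (simp add: frob_sym)

lemma frob_scaleR_right: "frob C (c *\<^sub>R A) = c * frob C A"
  using frob_scaleR_left[of c A C] by (simp add: frob_sym)

lemma interp_linear:
  fixes M :: "real^'n^'n" and v :: "'n \<Rightarrow> 'b::real_vector"
  shows "linear (\<lambda>h. \<Sum>m\<in>UNIV. (M *v h) $ m *\<^sub>R v m)"
  by (rule linearI)
     (simp_all add: matrix_vector_right_distrib scaleR_add_left sum.distrib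
        matrix_vector_mult_scaleR scaleR_sum_right)

lemma pderiv_interpK:
  fixes g0 :: "'b::euclidean_space"
  shows "pderiv_at (interpK P0 P g0 g) x j =
     (\<Sum>m\<in>UNIV. matrix_inv (affA P0 P) $ m $ j *\<^sub>R (g m - g0))"
proof -
  define M where "M = matrix_inv (affA P0 P)"
  define L where "L = (\<lambda>h. \<Sum>m\<in>UNIV. (M *v h) $ m *\<^sub>R (g m - g0))"
  have lin: "linear L" unfolding L_def by (rule interp_linear)
  have bl: "bounded_linear L" using lin by (simp add: linear_conv_bounded_linear)
  have eq: "interpK P0 P g0 g = (\<lambda>x. L x + (g0 - L P0))"
  proof
    fix x
    have "L (x - P0) = L x - L P0" using lin by (simp add: linear_diff)
    then show "interpK P0 P g0 g x = L x + (g0 - L P0)"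
      by (simp add: interpK_def L_def M_def algebra_simps)
  qed
  have "(interpK P0 P g0 g has_derivative L) (at x)"
    unfolding eq by (intro has_derivative_add_const bounded_linear.has_derivative[OF bl] has_derivative_ident)
  then have "frechet_derivative (interpK P0 P g0 g) (at x) = L"
    by (simp add: frechet_derivative_at[symmetric])
  moreover have "(M *v axis j 1) $ m = M $ m $ j" for m
    by (simp add: matrix_vector_mult_basis column_def)
  ultimately show ?thesis by (simp add: pderiv_at_def L_def M_def)
qed

lemma key_identity:
  fixes B0 Bi :: "real^'n^'n"
  assumes d: "0 < \<delta>" and s0: "symmetric_mat B0" and si: "symmetric_mat Bi"
    and p1: "(betaM \<delta> Bi \<noteq> betaM \<delta> B0 \<longrightarrow>
            0 < lam_den \<delta> B0 Bi \<and> 0 \<le> lam \<delta> B0 Bi \<and> lam \<delta> B0 Bi \<le> 1)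
       \<and> (betaM \<delta> Bi = betaM \<delta> B0 \<longrightarrow> lam_num \<delta> B0 Bi = 0)"
  shows "frob (LamHat \<delta> B0 Bi) (dual_term \<delta> Bi - dual_term \<delta> B0) = entropy_term \<delta> Bi - entropy_term \<delta> B0"
proof -
  have D: "dual_term \<delta> Bi - dual_term \<delta> B0 = - Delta_i \<delta> B0 Bi"
    by (simp add: dual_term_def Delta_i_def algebra_simps)
  have N: "lam_num \<delta> B0 Bi = entropy_term \<delta> Bi - entropy_term \<delta> B0 + frob (betaM \<delta> Bi) (Delta_i \<delta> B0 Bi)"
    by (simp add: lam_num_def entropy_term_def)
  show ?thesis
  proof (cases "betaM \<delta> Bi = betaM \<delta> B0")
    case True
    then show ?thesis using p1 N by (simp add: LamHat_def D frob_uminus_right)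
  next
    case False
    then have dp: "lam_den \<delta> B0 Bi \<noteq> 0" using p1 by simp
    have "frob (betaM \<delta> B0 - betaM \<delta> Bi) (Delta_i \<delta> B0 Bi) = - lam_den \<delta> B0 Bi"
      by (simp add: lam_den_def frob_diff_left)
    then have "frob (LamHat \<delta> B0 Bi) (dual_term \<delta> Bi - dual_term \<delta> B0) =
       - frob (betaM \<delta> Bi) (Delta_i \<delta> B0 Bi) + lam \<delta> B0 Bi * lam_den \<delta> B0 Bi"
      using False by (simp add: LamHat_def D frob_uminus_right frob_add_left frob_scaleR_left)
    also have "lam \<delta> B0 Bi * lam_den \<delta> B0 Bi = lam_num \<delta> B0 Bi"
      using dp by (simp add: lam_def)
    finally show ?thesis using N by simp
  qed
qed

lemma chain_sum:
  fixes A :: "real^'n^'n" and Lh D :: "'n \<Rightarrow> real^'n^'n"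
  assumes inv: "invertible A" and key: "\<And>m. frob (Lh m) (D m) = e m"
  shows "(\<Sum>j\<in>UNIV. frob (\<Sum>m'\<in>UNIV. (matrix_inv (transpose A) $ i $ m' * transpose A $ m' $ j) *\<^sub>R Lh m')
                        (\<Sum>m\<in>UNIV. matrix_inv A $ m $ j *\<^sub>R D m))
         = (\<Sum>m\<in>UNIV. matrix_inv A $ m $ i * e m)"
proof -
  define M where "M = matrix_inv A"
  have MA: "M ** A = mat 1" using matrix_inv_props[OF inv] by (simp add: M_def)
  have N: "matrix_inv (transpose A) $ i $ m' = M $ m' $ i" for m'
    unfolding matrix_inv_transpose[OF inv] M_def by (simp add: transpose_def)
  define F where "F = (\<lambda>m' m. frob (Lh m') (D m))"
  have T: "transpose A $ m' $ j = A $ j $ m'" for m' j by (simp add: transpose_def)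
  have "(\<Sum>j\<in>UNIV. frob (\<Sum>m'\<in>UNIV. (matrix_inv (transpose A) $ i $ m' * transpose A $ m' $ j) *\<^sub>R Lh m')
                        (\<Sum>m\<in>UNIV. matrix_inv A $ m $ j *\<^sub>R D m))
     = (\<Sum>j\<in>UNIV. \<Sum>m\<in>UNIV. \<Sum>m'\<in>UNIV. M $ m' $ i * A $ j $ m' * M $ m $ j * F m' m)"
    unfolding N T by (simp add: frob_sum_left frob_sum_right frob_scaleR_left frob_scaleR_right
        F_def M_def sum_distrib_left algebra_simps)
  also have "\<dots> = (\<Sum>m\<in>UNIV. \<Sum>j\<in>UNIV. \<Sum>m'\<in>UNIV. M $ m' $ i * A $ j $ m' * M $ m $ j * F m' m)"
    by (rule sum.swap)
  also have "\<dots> = (\<Sum>m\<in>UNIV. \<Sum>m'\<in>UNIV. \<Sum>j\<in>UNIV. M $ m' $ i * A $ j $ m' * M $ m $ j * F m' m)"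
    by (rule sum.cong[OF refl], rule sum.swap)
  also have "\<dots> = (\<Sum>m\<in>UNIV. \<Sum>m'\<in>UNIV. M $ m' $ i * F m' m * (\<Sum>j\<in>UNIV. M $ m $ j * A $ j $ m'))"
    by (simp add: sum_distrib_left algebra_simps)
  also have "\<dots> = (\<Sum>m\<in>UNIV. \<Sum>m'\<in>UNIV. (if m' = m then M $ m $ i * F m m else 0))"
  proof (intro sum.cong refl)
    fix m' m
    have "(\<Sum>j\<in>UNIV. M $ m $ j * A $ j $ m') = (M ** A) $ m $ m'"
      by (simp add: matrix_matrix_mult_def)
    then show "M $ m' $ i * F m' m * (\<Sum>j\<in>UNIV. M $ m $ j * A $ j $ m') = (if m' = m then M $ m $ i * F m m else 0)"
      by (simp add: MA mat_def)
  qed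
  also have "\<dots> = (\<Sum>m\<in>UNIV. matrix_inv A $ m $ i * e m)"
    by (simp add: F_def key M_def)
  finally show ?thesis .
qed

lemma affA_axis: "affA P0 P *v axis m 1 = P m - P0"
  by (simp add: matrix_vector_mult_basis column_def affA_def vec_eq_iff)

lemma affA_inv_vertex:
  assumes inv: "invertible (affA P0 P)"
  shows "matrix_inv (affA P0 P) *v (P m - P0) = axis m 1"
proof -
  have "matrix_inv (affA P0 P) *v (affA P0 P *v axis m 1) = axis m 1"
    using matrix_inv_props[OF inv] by (simp add: matrix_vector_mul_assoc)
  then show ?thesis by (simp add: affA_axis)
qed

definition bary_ok :: "real^'n \<Rightarrow> ('n \<Rightarrow> real^'n) \<Rightarrow> (real^'n) set" where
  "bary_ok P0 P = {x. \<forall>m. 0 \<le> (matrix_inv (affA P0 P) *v (x - P0)) $ m \<and>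
                              (matrix_inv (affA P0 P) *v (x - P0)) $ m \<le> 1}"

lemma convex_bary_ok:
  fixes P0 :: "real^'n" and P :: "'n \<Rightarrow> real^'n"
  shows "convex (bary_ok P0 P)"
proof (rule convexI)
  fix x y :: "real^'n" and u v :: real
  assume x: "x \<in> bary_ok P0 P" and y: "y \<in> bary_ok P0 P" and u: "0 \<le> u" and v: "0 \<le> v"
    and uv: "u + v = 1"
  define M where "M = matrix_inv (affA P0 P)"
  have e: "u *\<^sub>R x + v *\<^sub>R y - P0 = u *\<^sub>R (x - P0) + v *\<^sub>R (y - P0)"
    using uv by (simp add: algebra_simps) (metis add.commute scaleR_add_left scaleR_one diff_add_cancel add_diff_cancel_left')
  have c: "(M *v (u *\<^sub>R x + v *\<^sub>R y - P0)) $ m = u * (M *v (x - P0)) $ m + v * (M *v (y - P0)) $ m" for m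
    unfolding e by (simp add: matrix_vector_right_distrib matrix_vector_mult_scaleR)
  show "u *\<^sub>R x + v *\<^sub>R y \<in> bary_ok P0 P"
  proof (simp add: bary_ok_def M_def[symmetric], intro allI conjI)
    fix m
    have x1: "0 \<le> (M *v (x - P0)) $ m" "(M *v (x - P0)) $ m \<le> 1"
      and y1: "0 \<le> (M *v (y - P0)) $ m" "(M *v (y - P0)) $ m \<le> 1"
      using x y by (auto simp: bary_ok_def M_def)
    show "0 \<le> (M *v (u *\<^sub>R x + v *\<^sub>R y - P0)) $ m" unfolding c
      using x1 y1 u v by simp
    have "u * (M *v (x - P0)) $ m \<le> u" using x1 u by (simp add: mult_left_le)
    moreover have "v * (M *v (y - P0)) $ m \<le> v" using y1 v by (simp add: mult_left_le)
    ultimately show "(M *v (u *\<^sub>R x + v *\<^sub>R y - P0)) $ m \<le> 1" unfolding c using uv by linarith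
  qed
qed

lemma hull_sub_bary:
  assumes inv: "invertible (affA P0 P)"
  shows "convex hull (insert P0 (range P)) \<subseteq> bary_ok P0 P"
proof (rule hull_minimal)
  show "convex (bary_ok P0 P)" by (rule convex_bary_ok)
  show "insert P0 (range P) \<subseteq> bary_ok P0 P"
    using affA_inv_vertex[OF inv] by (auto simp: bary_ok_def axis_def)
qed

lemma affine_hull_UNIV:
  assumes inv: "invertible (affA P0 P)"
  shows "affine hull (insert P0 (range P)) = UNIV"
proof -
  have r: "(+) (- P0) ` range P = columns (affA P0 P)"
    unfolding columns_image_basis by (auto simp: affA_axis image_iff)
  have "span (columns (affA P0 P)) = UNIV"
    using inv matrix_right_invertible_span_columns[of "affA P0 P"]
    unfolding invertible_def span_vec_eq by blast
  then have "affine hull (insert P0 (range P)) = (+) P0 ` UNIV"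
    unfolding affine_hull_insert_span_gen r by simp
  also have "\<dots> = UNIV" by (simp add: surj_def)
  finally show ?thesis .
qed

lemma simplex_facts:
  assumes inv: "invertible (affA P0 P)"
  shows "simplexK P0 P \<noteq> {}" "closure (simplexK P0 P) = convex hull (insert P0 (range P))"
    "bounded (simplexK P0 P)" "open (simplexK P0 P)"
    "compact (convex hull (insert P0 (range P)))"
proof -
  let ?H = "convex hull (insert P0 (range P))"
  have cH: "convex ?H" by simp
  have compH: "compact ?H" by (intro compact_convex_hull finite_imp_compact) simp
  then show "compact ?H" .
  have "affine hull ?H = UNIV" using affine_hull_UNIV[OF inv] by simp
  then have "rel_interior ?H = interior ?H" by (rule rel_interior_interior)
  moreover have "rel_interior ?H \<noteq> {}" using rel_interior_eq_empty[OF cH] by simp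
  ultimately have ne: "interior ?H \<noteq> {}" by simp
  then show "simplexK P0 P \<noteq> {}" by (simp add: simplexK_def)
  have "closure (interior ?H) = closure ?H" by (rule convex_closure_interior[OF cH ne])
  also have "\<dots> = ?H" using compH by (simp add: compact_imp_closed closure_closed)
  finally show "closure (simplexK P0 P) = ?H" by (simp add: simplexK_def)
  show "bounded (simplexK P0 P)" unfolding simplexK_def
    using compH by (meson bounded_subset compact_imp_bounded interior_subset)
  show "open (simplexK P0 P)" by (simp add: simplexK_def)
qed

lemma A_entry_bound:
  assumes inv: "invertible (affA P0 P)"
  shows "\<bar>affA P0 P $ j $ m\<bar> \<le> diameter (simplexK P0 P)"
proof -
  let ?H = "convex hull (insert P0 (range P))"
  have bH: "bounded ?H" using simplex_facts(5)[OF inv] by (rule compact_imp_bounded)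
  have "\<bar>affA P0 P $ j $ m\<bar> = \<bar>(P m - P0) $ j\<bar>" by (simp add: affA_def)
  also have "\<dots> \<le> norm (P m - P0)" by (rule component_le_norm_cart)
  also have "\<dots> = dist (P m) P0" by (simp add: dist_norm)
  also have "\<dots> \<le> diameter ?H" by (rule diameter_bounded_bound[OF bH]) (auto intro: hull_inc)
  also have "\<dots> = diameter (simplexK P0 P)"
    using diameter_closure[OF simplex_facts(3)[OF inv]] simplex_facts(2)[OF inv] by simp
  finally show ?thesis .
qed

lemma M_entry_bound:
  assumes inv: "invertible (affA P0 P)" and a: "matrix_inv (affA P0 P) $ m $ i \<noteq> 0"
  shows "0 < inball_diam (simplexK P0 P) \<and>
         \<bar>matrix_inv (affA P0 P) $ m $ i\<bar> * inball_diam (simplexK P0 P) \<le> 2"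
proof -
  define K where "K = simplexK P0 P"
  define M where "M = matrix_inv (affA P0 P)"
  define a where "a = M $ m $ i"
  let ?H = "convex hull (insert P0 (range P))"
  define S where "S = {2 * r |r c. 0 < r \<and> ball c r \<subseteq> K}"
  have apos: "0 < \<bar>a\<bar>" using a by (simp add: a_def M_def)
  have clK: "closure K = ?H" using simplex_facts(2)[OF inv] by (simp add: K_def)
  have rb: "r * \<bar>a\<bar> \<le> 1" if r: "0 < r" and b: "ball c r \<subseteq> K" for r c
  proof -
    have "cball c r \<subseteq> ?H" using closure_mono[OF b] r clK by simp
    then have c1: "c \<in> ?H" and c2: "c + r *\<^sub>R axis i 1 \<in> ?H"
      using r by (auto simp: dist_norm)
    have u1: "0 \<le> (M *v (c - P0)) $ m" "(M *v (c - P0)) $ m \<le> 1"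
      using hull_sub_bary[OF inv] c1 by (auto simp: bary_ok_def M_def)
    have u2: "0 \<le> (M *v (c + r *\<^sub>R axis i 1 - P0)) $ m" "(M *v (c + r *\<^sub>R axis i 1 - P0)) $ m \<le> 1"
      using hull_sub_bary[OF inv] c2 by (auto simp: bary_ok_def M_def)
    have "(M *v (c + r *\<^sub>R axis i 1 - P0)) $ m = (M *v (c - P0)) $ m + r * a"
    proof -
      have e: "c + r *\<^sub>R axis i 1 - P0 = (c - P0) + r *\<^sub>R axis i 1" by (simp add: algebra_simps)
      show ?thesis
        by (simp only: e) (simp add: matrix_vector_right_distrib matrix_vector_mult_scaleR
            matrix_vector_mult_basis column_def a_def)
    qed
    then have "\<bar>r * a\<bar> \<le> 1" using u1 u2 by linarith
    then show ?thesis using r by (simp add: abs_mult)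
  qed
  have ub: "s \<le> 2 / \<bar>a\<bar>" if "s \<in> S" for s
  proof -
    obtain r c where s: "s = 2 * r" and r: "0 < r" and b: "ball c r \<subseteq> K" using \<open>s \<in> S\<close> by (auto simp: S_def)
    have "r * \<bar>a\<bar> \<le> 1" by (rule rb[OF r b])
    then show ?thesis using apos s by (simp add: field_simps)
  qed
  obtain c where cK: "c \<in> K" using simplex_facts(1)[OF inv] by (auto simp: K_def)
  obtain r where r: "0 < r" and b: "ball c r \<subseteq> K"
    using simplex_facts(4)[OF inv] cK unfolding K_def by (meson openE)
  have inS: "2 * r \<in> S" using r b by (auto simp: S_def)
  have bdd: "bdd_above S" using ub by (auto simp: bdd_above_def)
  have "2 * r \<le> Sup S" by (rule cSup_upper[OF inS bdd])
  then have p: "0 < Sup S" using r by simp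
  have "Sup S \<le> 2 / \<bar>a\<bar>" by (rule cSup_least) (use inS ub in auto)
  then have "\<bar>a\<bar> * Sup S \<le> 2" using apos by (simp add: field_simps)
  moreover have "inball_diam K = Sup S" by (simp add: inball_diam_def S_def)
  ultimately show ?thesis using p by (simp add: K_def a_def M_def)
qed

lemma coeff_bound:
  assumes inv: "invertible (affA P0 P)"
    and shape: "diameter (simplexK P0 P) \<le> \<sigma> * inball_diam (simplexK P0 P)"
  shows "\<bar>matrix_inv (affA P0 P) $ m $ i * affA P0 P $ j $ m\<bar> \<le> 2 * \<bar>\<sigma>\<bar>"
proof (cases "matrix_inv (affA P0 P) $ m $ i = 0")
  case True then show ?thesis by simp
next
  case False
  define a where "a = matrix_inv (affA P0 P) $ m $ i"
  define \<rho> where "\<rho> = inball_diam (simplexK P0 P)"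
  have mb: "0 < \<rho>" "\<bar>a\<bar> * \<rho> \<le> 2" using M_entry_bound[OF inv False] by (simp_all add: a_def \<rho>_def)
  have "\<bar>a * affA P0 P $ j $ m\<bar> = \<bar>a\<bar> * \<bar>affA P0 P $ j $ m\<bar>" by (simp add: abs_mult)
  also have "\<dots> \<le> \<bar>a\<bar> * diameter (simplexK P0 P)"
    by (intro mult_left_mono A_entry_bound[OF inv]) simp
  also have "\<dots> \<le> \<bar>a\<bar> * (\<sigma> * \<rho>)" by (intro mult_left_mono) (use shape \<rho>_def in auto)
  also have "\<dots> = \<sigma> * (\<bar>a\<bar> * \<rho>)" by simp
  also have "\<dots> \<le> \<bar>\<sigma>\<bar> * (\<bar>a\<bar> * \<rho>)" using mb by (intro mult_right_mono) auto
  also have "\<dots> \<le> \<bar>\<sigma>\<bar> * 2" using mb by (intro mult_left_mono) auto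
  finally show ?thesis by (simp add: a_def mult.commute)
qed

lemma interp_affine:
  fixes g0 :: "'b::real_normed_vector"
  shows "\<exists>L c. linear L \<and> interpK P0 P g0 g = (\<lambda>x. L x + c)"
proof -
  define M where "M = matrix_inv (affA P0 P)"
  define L where "L = (\<lambda>h. \<Sum>m\<in>UNIV. (M *v h) $ m *\<^sub>R (g m - g0))"
  have lin: "linear L" unfolding L_def by (rule interp_linear)
  have "interpK P0 P g0 g = (\<lambda>x. L x + (g0 - L P0))"
  proof
    fix x
    have "L (x - P0) = L x - L P0" using lin by (simp add: linear_diff)
    then show "interpK P0 P g0 g x = L x + (g0 - L P0)"
      by (simp add: interpK_def L_def M_def algebra_simps)
  qed
  then show ?thesis using lin by blast
qed

lemma interp_cont:
  fixes g0 :: "'b::euclidean_space"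
  shows "continuous_on S (interpK P0 P g0 g)"
proof -
  obtain L c where "linear L" and e: "interpK P0 P g0 g = (\<lambda>x. L x + c)"
    using interp_affine by blast
  then show ?thesis unfolding e by (intro continuous_intros linear_continuous_on) (simp add: linear_conv_bounded_linear)
qed

lemma interp_P0: "interpK P0 P g0 g P0 = g0"
  by (simp add: interpK_def)

lemma interp_Pm:
  assumes inv: "invertible (affA P0 P)"
  shows "interpK P0 P g0 g (P m) = g m"
proof -
  have "(\<Sum>m'\<in>UNIV. axis m 1 $ m' *\<^sub>R (g m' - g0)) = (\<Sum>m'\<in>UNIV. if m' = m then g m - g0 else 0)"
    by (intro sum.cong refl) (simp add: axis_def)
  then show ?thesis by (simp add: interpK_def affA_inv_vertex[OF inv])
qed

lemma sup_ge_vertex: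
  fixes g0 :: "real^'n^'n"
  assumes inv: "invertible (affA P0 P)" and v: "v \<in> insert P0 (range P)"
  shows "norm (interpK P0 P g0 g v) \<le> (SUP x\<in>simplexK P0 P. norm (interpK P0 P g0 g x))"
proof -
  define K where "K = simplexK P0 P"
  let ?H = "convex hull (insert P0 (range P))"
  let ?f = "\<lambda>x. norm (interpK P0 P g0 g x)"
  define S where "S = (SUP x\<in>K. ?f x)"
  have cf: "continuous_on T ?f" for T by (intro continuous_intros interp_cont)
  have "compact (?f ` ?H)" by (rule compact_continuous_image[OF cf simplex_facts(5)[OF inv]])
  then have "bdd_above (?f ` ?H)" by (intro bounded_imp_bdd_above compact_imp_bounded)
  moreover have "?f ` K \<subseteq> ?f ` ?H" unfolding K_def simplexK_def using interior_subset by blast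
  ultimately have bdd: "bdd_above (?f ` K)" by (rule bdd_above_mono)
  have "?f ` K \<subseteq> {..S}" unfolding S_def using bdd by (auto intro: cSUP_upper)
  then have "?f ` closure K \<subseteq> {..S}" by (intro image_closure_subset cf) simp_all
  moreover have "v \<in> closure K" using simplex_facts(2)[OF inv] v by (simp add: K_def hull_inc)
  ultimately show ?thesis by (auto simp: S_def K_def)
qed

lemma LamHat_bound:
  fixes B0 Bi :: "real^'n^'n"
  assumes p1: "betaM \<delta> Bi \<noteq> betaM \<delta> B0 \<longrightarrow> 0 < lam_den \<delta> B0 Bi \<and> 0 \<le> lam \<delta> B0 Bi \<and> lam \<delta> B0 Bi \<le> 1"
    and b0: "norm (betaM \<delta> B0) \<le> S" and bi: "norm (betaM \<delta> Bi) \<le> S"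
  shows "norm (LamHat \<delta> B0 Bi) \<le> S"
proof (cases "betaM \<delta> Bi = betaM \<delta> B0")
  case True then show ?thesis using bi by (simp add: LamHat_def)
next
  case False
  define l where "l = lam \<delta> B0 Bi"
  have l: "0 \<le> l" "l \<le> 1" using p1 False by (simp_all add: l_def)
  have "LamHat \<delta> B0 Bi = (1 - l) *\<^sub>R betaM \<delta> Bi + l *\<^sub>R betaM \<delta> B0"
    using False by (simp add: LamHat_def l_def algebra_simps)
  also have "norm \<dots> \<le> (1 - l) * norm (betaM \<delta> Bi) + l * norm (betaM \<delta> B0)"
    using l by (metis (no_types) abs_of_nonneg diff_ge_0_iff_ge norm_scaleR norm_triangle_ineq)
  also have "\<dots> \<le> (1 - l) * S + l * S"
    using l b0 bi by (intro add_mono mult_left_mono) auto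
  finally show ?thesis by (simp add: algebra_simps)
qed

lemma part1_main:
  fixes \<delta> :: real and P0 :: "real^'n" and P :: "'n \<Rightarrow> real^'n" and B0 :: "real^'n^'n" and B :: "'n \<Rightarrow> real^'n^'n"
  assumes h: "0 < \<delta> \<and> \<delta> < 1 \<and> invertible (affA P0 P) \<and> symmetric_mat B0 \<and> (\<forall>m. symmetric_mat (B m))"
  shows "(\<forall>i. betaM \<delta> (B i) \<noteq> betaM \<delta> B0 \<longrightarrow>
              0 < lam_den \<delta> B0 (B i) \<and> 0 \<le> lam \<delta> B0 (B i) \<and> lam \<delta> B0 (B i) \<le> 1)
      \<and> (\<forall>x\<in>simplexK P0 P. \<forall>i.
            (\<Sum>j\<in>UNIV. frob (LamK \<delta> (affA P0 P) B0 B i j)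
               (pderiv_at (interpK P0 P (dual_term \<delta> B0) (\<lambda>m. dual_term \<delta> (B m))) x j))
          = pderiv_at (interpK P0 P (entropy_term \<delta> B0) (\<lambda>m. entropy_term \<delta> (B m))) x i)"
proof (rule conjI)
  have d: "0 < \<delta>" and inv: "invertible (affA P0 P)" and s0: "symmetric_mat B0"
    and sm: "\<And>m. symmetric_mat (B m)" using h by auto
  note p1 = part1_pair[OF d s0 sm]
  show "\<forall>i. betaM \<delta> (B i) \<noteq> betaM \<delta> B0 \<longrightarrow>
              0 < lam_den \<delta> B0 (B i) \<and> 0 \<le> lam \<delta> B0 (B i) \<and> lam \<delta> B0 (B i) \<le> 1"
    using p1 by blast
  show "\<forall>x\<in>simplexK P0 P. \<forall>i.
            (\<Sum>j\<in>UNIV. frob (LamK \<delta> (affA P0 P) B0 B i j)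
               (pderiv_at (interpK P0 P (dual_term \<delta> B0) (\<lambda>m. dual_term \<delta> (B m))) x j))
          = pderiv_at (interpK P0 P (entropy_term \<delta> B0) (\<lambda>m. entropy_term \<delta> (B m))) x i"
  proof (intro ballI allI)
    fix x i
    have key: "frob (LamHat \<delta> B0 (B m)) (dual_term \<delta> (B m) - dual_term \<delta> B0)
               = entropy_term \<delta> (B m) - entropy_term \<delta> B0" for m
      by (rule key_identity[OF d s0 sm p1])
    show "(\<Sum>j\<in>UNIV. frob (LamK \<delta> (affA P0 P) B0 B i j)
               (pderiv_at (interpK P0 P (dual_term \<delta> B0) (\<lambda>m. dual_term \<delta> (B m))) x j))
          = pderiv_at (interpK P0 P (entropy_term \<delta> B0) (\<lambda>m. entropy_term \<delta> (B m))) x i"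
      unfolding pderiv_interpK LamK_def
      using chain_sum[OF inv, of "\<lambda>m. LamHat \<delta> B0 (B m)" "\<lambda>m. dual_term \<delta> (B m) - dual_term \<delta> B0"
          "\<lambda>m. entropy_term \<delta> (B m) - entropy_term \<delta> B0" i, OF key] by simp
  qed
qed

lemma part2_main:
  fixes \<sigma> :: real
  shows "\<exists>C::real. \<forall>(\<delta>::real) (P0::real^'n) (P::'n \<Rightarrow> real^'n) (B0::real^'n^'n) (B::'n \<Rightarrow> real^'n^'n).
        0 < \<delta> \<and> \<delta> < 1 \<and> invertible (affA P0 P) \<and> symmetric_mat B0 \<and> (\<forall>m. symmetric_mat (B m))
        \<and> diameter (simplexK P0 P) \<le> \<sigma> * inball_diam (simplexK P0 P) \<longrightarrow>
          (\<forall>i j. norm (LamK \<delta> (affA P0 P) B0 B i j)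
                 \<le> C * (SUP x\<in>simplexK P0 P. norm (interpK P0 P (betaM \<delta> B0) (\<lambda>m. betaM \<delta> (B m)) x)))"
proof (intro exI[of _ "real CARD('n) * (2 * \<bar>\<sigma>\<bar>)"] allI impI)
    fix \<delta> :: real and P0 :: "real^'n" and P :: "'n \<Rightarrow> real^'n" and B0 :: "real^'n^'n"
      and B :: "'n \<Rightarrow> real^'n^'n" and i j :: 'n
    assume h: "0 < \<delta> \<and> \<delta> < 1 \<and> invertible (affA P0 P) \<and> symmetric_mat B0 \<and> (\<forall>m. symmetric_mat (B m))
        \<and> diameter (simplexK P0 P) \<le> \<sigma> * inball_diam (simplexK P0 P)"
    then have d: "0 < \<delta>" and inv: "invertible (affA P0 P)" and s0: "symmetric_mat B0"
      and sm: "\<And>m. symmetric_mat (B m)"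
      and shape: "diameter (simplexK P0 P) \<le> \<sigma> * inball_diam (simplexK P0 P)" by auto
    define S where "S = (SUP x\<in>simplexK P0 P. norm (interpK P0 P (betaM \<delta> B0) (\<lambda>m. betaM \<delta> (B m)) x))"
    have b0: "norm (betaM \<delta> B0) \<le> S"
      using sup_ge_vertex[OF inv, of P0 "betaM \<delta> B0" "\<lambda>m. betaM \<delta> (B m)"] by (simp add: S_def interp_P0)
    have bm: "norm (betaM \<delta> (B m)) \<le> S" for m
      using sup_ge_vertex[OF inv, of "P m" "betaM \<delta> B0" "\<lambda>m. betaM \<delta> (B m)"] by (simp add: S_def interp_Pm[OF inv])
    have Sn: "0 \<le> S" using b0 norm_ge_zero order_trans by blast
    have lh: "norm (LamHat \<delta> B0 (B m)) \<le> S" for m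
      by (rule LamHat_bound[OF _ b0 bm]) (use part1_pair[OF d s0 sm] in blast)
    have cm: "\<bar>matrix_inv (transpose (affA P0 P)) $ i $ m * transpose (affA P0 P) $ m $ j\<bar> \<le> 2 * \<bar>\<sigma>\<bar>" for m
    proof -
      have "matrix_inv (transpose (affA P0 P)) $ i $ m = matrix_inv (affA P0 P) $ m $ i"
        unfolding matrix_inv_transpose[OF inv] by (simp add: transpose_def)
      moreover have "transpose (affA P0 P) $ m $ j = affA P0 P $ j $ m" by (simp add: transpose_def)
      ultimately show ?thesis using coeff_bound[OF inv shape, of m i j] by simp
    qed
    have "norm (LamK \<delta> (affA P0 P) B0 B i j)
        \<le> (\<Sum>m\<in>UNIV. norm ((matrix_inv (transpose (affA P0 P)) $ i $ m * transpose (affA P0 P) $ m $ j) *\<^sub>R LamHat \<delta> B0 (B m)))"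
      unfolding LamK_def by (rule norm_sum)
    also have "\<dots> \<le> (\<Sum>m\<in>(UNIV::'n set). 2 * \<bar>\<sigma>\<bar> * S)"
    proof (rule sum_mono)
      fix m :: 'n
      show "norm ((matrix_inv (transpose (affA P0 P)) $ i $ m * transpose (affA P0 P) $ m $ j) *\<^sub>R LamHat \<delta> B0 (B m))
            \<le> 2 * \<bar>\<sigma>\<bar> * S"
        unfolding norm_scaleR by (rule mult_mono[OF cm lh]) simp_all
    qed
    also have "\<dots> = real CARD('n) * (2 * \<bar>\<sigma>\<bar>) * S" by simp
    finally show "norm (LamK \<delta> (affA P0 P) B0 B i j)
                 \<le> real CARD('n) * (2 * \<bar>\<sigma>\<bar>) * (SUP x\<in>simplexK P0 P. norm (interpK P0 P (betaM \<delta> B0) (\<lambda>m. betaM \<delta> (B m)) x))"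
      by (simp add: S_def)
qed


theorem lemma2p2:
  assumes dim: "CARD('n::finite) \<in> {2, 3}"
  shows
  "(\<forall>(\<delta>::real) (P0::real^'n) (P::'n \<Rightarrow> real^'n) (B0::real^'n^'n) (B::'n \<Rightarrow> real^'n^'n).
      0 < \<delta> \<and> \<delta> < 1 \<and> invertible (affA P0 P) \<and> symmetric_mat B0 \<and> (\<forall>m. symmetric_mat (B m)) \<longrightarrow>
        (\<forall>i. betaM \<delta> (B i) \<noteq> betaM \<delta> B0 \<longrightarrow>
              0 < lam_den \<delta> B0 (B i) \<and> 0 \<le> lam \<delta> B0 (B i) \<and> lam \<delta> B0 (B i) \<le> 1)
      \<and> (\<forall>x\<in>simplexK P0 P. \<forall>i.
            (\<Sum>j\<in>UNIV. frob (LamK \<delta> (affA P0 P) B0 B i j)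
               (pderiv_at (interpK P0 P (dual_term \<delta> B0) (\<lambda>m. dual_term \<delta> (B m))) x j))
          = pderiv_at (interpK P0 P (entropy_term \<delta> B0) (\<lambda>m. entropy_term \<delta> (B m))) x i))
   \<and> (\<forall>\<sigma>::real. \<exists>C::real. \<forall>(\<delta>::real) (P0::real^'n) (P::'n \<Rightarrow> real^'n) (B0::real^'n^'n) (B::'n \<Rightarrow> real^'n^'n).
        0 < \<delta> \<and> \<delta> < 1 \<and> invertible (affA P0 P) \<and> symmetric_mat B0 \<and> (\<forall>m. symmetric_mat (B m))
        \<and> diameter (simplexK P0 P) \<le> \<sigma> * inball_diam (simplexK P0 P) \<longrightarrow>
          (\<forall>i j. norm (LamK \<delta> (affA P0 P) B0 B i j)
                 \<le> C * (SUP x\<in>simplexK P0 P. norm (interpK P0 P (betaM \<delta> B0) (\<lambda>m. betaM \<delta> (B m)) x))))"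
using part1_main part2_main by blast

end
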